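(* A finite-dimensional topological manifold, or a finite-dimensional CW complex, has the homotopy fixed point property only if it is a singleton.
   Context: A topological space $X$ has the homotopy fixed point property if for every continuous map $f\colon I\times X\to X$, where $I=[0,1]$, there exists a continuous map $p\colon I\to X$ with $f(t,p(t))=p(t)$ for all $t\in I$. *)

theory Defs
  imports "HOL-Analysis.Analysis"
begin

definition homotopy_fixed_point_property :: "'a topology \<Rightarrow> bool" where
  "homotopy_fixed_point_property X \<longleftrightarrow>
     (\<forall>f. continuous_map (prod_topology (top_of_set {0..1::real}) X) X f \<longrightarrow>
        (\<exists>p. continuous_map (top_of_set {0..1::real}) X p \<and>
             (\<forall>t\<in>{0..1::real}. f (t, p t) = p t)))"

definition finite_dim_topological_manifold :: "'a topology \<Rightarrow> bool" where
  "finite_dim_topological_manifold X \<longleftrightarrow>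
     Hausdorff_space X \<and> second_countable X \<and>
     (\<exists>n. \<forall>x\<in>topspace X. \<exists>U V. openin X U \<and> x \<in> U \<and>
          openin (Euclidean_space n) V \<and>
          subtopology X U homeomorphic_space subtopology (Euclidean_space n) V)"

definition cw_disc :: "nat \<Rightarrow> (nat \<Rightarrow> real) set" where
  "cw_disc n = {x. (\<forall>i\<ge>n. x i = 0) \<and> (\<Sum>i<n. (x i)\<^sup>2) \<le> 1}"

definition cw_open_disc :: "nat \<Rightarrow> (nat \<Rightarrow> real) set" where
  "cw_open_disc n = {x. (\<forall>i\<ge>n. x i = 0) \<and> (\<Sum>i<n. (x i)\<^sup>2) < 1}"

definition cw_sphere :: "nat \<Rightarrow> (nat \<Rightarrow> real) set" where
  "cw_sphere n = {x. (\<forall>i\<ge>n. x i = 0) \<and> (\<Sum>i<n. (x i)\<^sup>2) = 1}"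

definition finite_dim_CW_complex :: "'a topology \<Rightarrow> bool" where
  "finite_dim_CW_complex X \<longleftrightarrow>
     Hausdorff_space X \<and>
     (\<exists>(E :: 'a set set) (d :: 'a set \<Rightarrow> nat) (\<phi> :: 'a set \<Rightarrow> (nat \<Rightarrow> real) \<Rightarrow> 'a) (N :: nat).
        pairwise disjnt E \<and> \<Union>E = topspace X \<and> {} \<notin> E \<and>
        (\<forall>e\<in>E. d e \<le> N \<and>
           continuous_map (subtopology (Euclidean_space (d e)) (cw_disc (d e))) X (\<phi> e) \<and>
           \<phi> e ` cw_open_disc (d e) = e \<and>
           homeomorphic_map (subtopology (Euclidean_space (d e)) (cw_open_disc (d e)))
                            (subtopology X e) (\<phi> e) \<and>
           \<phi> e ` cw_sphere (d e) \<subseteq> \<Union>{e'\<in>E. d e' < d e} \<and>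
           finite {e'\<in>E. e' \<inter> \<phi> e ` cw_disc (d e) \<noteq> {}}) \<and>
        (\<forall>C. C \<subseteq> topspace X \<longrightarrow>
           (closedin X C \<longleftrightarrow> (\<forall>e\<in>E. closedin X (C \<inter> \<phi> e ` cw_disc (d e))))))"

end

theory Submission
  imports Defs
begin

definition clamp01 :: "real \<Rightarrow> real" where "clamp01 z = max 0 (min 1 z)"
definition tauS :: "real \<Rightarrow> real" where "tauS y = max (2 - 5*y) (min y (4 - 5*y))"
definition PsiS :: "real \<Rightarrow> real \<Rightarrow> real" where
  "PsiS t z = clamp01 (clamp01 z + tauS (clamp01 z) - t)"

lemma PsiS_range: "PsiS t z \<in> {0..1}"
  by (simp add: PsiS_def clamp01_def)

lemma continuous_PsiS: "continuous_on UNIV (\<lambda>(t,z). PsiS t z)"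
  unfolding PsiS_def clamp01_def tauS_def case_prod_unfold
  by (intro continuous_intros)

lemma PsiS_fix:
  assumes "t \<in> {0..1}" "c = PsiS t c"
  shows "c \<in> {0..1} \<and> tauS c = t"
proof -
  have c01: "c \<in> {0..1}" using assms(2) PsiS_range by metis
  then have cl: "clamp01 c = c" by (simp add: clamp01_def)
  have "c = clamp01 (c + tauS c - t)" using assms(2) cl by (simp add: PsiS_def)
  then show ?thesis using c01 assms(1)
    unfolding clamp01_def tauS_def by (auto simp: max_def min_def split: if_splits)
qed

lemma no_fixed_path:
  assumes cont: "continuous_on {0..1} q" and fx: "\<forall>t\<in>{0..1::real}. q t = PsiS t (q t)"
  shows False
proof -
  have F: "t \<in> {0..1} \<Longrightarrow> q t \<in> {0..1} \<and> tauS (q t) = t" for t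
    using PsiS_fix fx by blast
  have q0: "q 0 > 2/3" using F[of 0] unfolding tauS_def by (auto simp: max_def min_def split: if_splits)
  have q1: "q 1 < 1/3" using F[of 1] unfolding tauS_def by (auto simp: max_def min_def split: if_splits)
  obtain s where s: "0 \<le> s" "s \<le> 1" "q s = 1/3"
    using IVT2'[of q 1 "1/3" 0] q0 q1 cont by force
  have "s = 1/3" using F[of s] s by (simp add: tauS_def)
  with s have q13: "q (1/3) = 1/3" by simp
  obtain s' where s': "0 \<le> s'" "s' \<le> 1/3" "q s' = 2/3"
    using IVT2'[of q "1/3" "2/3" 0] q0 q13 continuous_on_subset[OF cont, of "{0..1/3}"] by force
  have "s' = 2/3" using F[of s'] s' by (simp add: tauS_def)
  with s' show False by simp
qed


lemma cm_PsiS: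
  assumes "continuous_map Z euclideanreal a" "continuous_map Z euclideanreal b"
  shows "continuous_map Z euclideanreal (\<lambda>z. PsiS (a z) (b z))"
  unfolding PsiS_def clamp01_def tauS_def
  by (intro continuous_intros continuous_map_real_mult_left assms)

lemma gh_no_HFPP:
  assumes g: "continuous_map X euclideanreal g"
    and h: "continuous_map (top_of_set {0..1::real}) X h"
    and gh: "\<forall>s\<in>{0..1}. g (h s) = s"
  shows "\<not> homotopy_fixed_point_property X"
proof
  assume HF: "homotopy_fixed_point_property X"
  define F where "F = (\<lambda>z. h (PsiS (fst z) (g (snd z))))"
  let ?P = "prod_topology (top_of_set {0..1::real}) X"
  have c1: "continuous_map ?P euclideanreal (\<lambda>z. PsiS (fst z) (g (snd z)))"
  proof (rule cm_PsiS)
    show "continuous_map ?P euclideanreal fst"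
      using continuous_map_fst continuous_map_into_fulltopology by blast
    show "continuous_map ?P euclideanreal (\<lambda>z. g (snd z))"
      using continuous_map_compose[OF continuous_map_snd g] by (simp add: o_def)
  qed
  have c2: "continuous_map ?P (top_of_set {0..1}) (\<lambda>z. PsiS (fst z) (g (snd z)))"
    using c1 PsiS_range by (simp add: continuous_map_in_subtopology image_subset_iff)
  have "continuous_map ?P X F"
    using continuous_map_compose[OF c2 h] by (simp add: F_def o_def)
  then obtain p where p: "continuous_map (top_of_set {0..1::real}) X p"
     "\<forall>t\<in>{0..1::real}. F (t, p t) = p t"
    using HF unfolding homotopy_fixed_point_property_def by blast
  have qc: "continuous_map (top_of_set {0..1::real}) euclideanreal (\<lambda>t. g (p t))"
    using continuous_map_compose[OF p(1) g] by (simp add: o_def)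
  have "continuous_on {0..1} (\<lambda>t. g (p t))"
    using qc by (simp add: continuous_map_iff_continuous)
  moreover have "\<forall>t\<in>{0..1::real}. g (p t) = PsiS t (g (p t))"
  proof
    fix t :: real assume t: "t \<in> {0..1}"
    have "g (p t) = g (h (PsiS t (g (p t))))" using p(2) t by (simp add: F_def)
    also have "\<dots> = PsiS t (g (p t))" using gh PsiS_range by blast
    finally show "g (p t) = PsiS t (g (p t))" .
  qed
  ultimately show False using no_fixed_path by blast
qed

lemma discrete_no_HFPP:
  assumes "a \<in> topspace X" "b \<in> topspace X" "a \<noteq> b"
    and op: "\<And>S. S \<subseteq> topspace X \<Longrightarrow> openin X S"
  shows "\<not> homotopy_fixed_point_property X"
proof
  assume HF: "homotopy_fixed_point_property X"
  define f where "f = (\<lambda>x. if x = a then b else a)"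
  have fc: "continuous_map X X f"
    unfolding continuous_map_def using assms by (auto simp: f_def)
  have "continuous_map (prod_topology (top_of_set {0..1::real}) X) X (\<lambda>z. f (snd z))"
    using continuous_map_compose[OF continuous_map_snd fc] by (simp add: o_def)
  then obtain p where p: "\<forall>t\<in>{0..1::real}. f (p t) = p t"
    using HF unfolding homotopy_fixed_point_property_def by fastforce
  then show False using assms(3) by (metis atLeastAtMost_iff f_def zero_le_one order_refl)
qed

lemma HFPP_nonempty:
  assumes "homotopy_fixed_point_property X" shows "topspace X \<noteq> {}"
proof
  assume e: "topspace X = {}"
  have "continuous_map (prod_topology (top_of_set {0..1::real}) X) X (\<lambda>z. undefined)"
    using e by simp
  then obtain p where "continuous_map (top_of_set {0..1::real}) X p"
    using assms unfolding homotopy_fixed_point_property_def by blast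
  then have "p 0 \<in> topspace X" by (simp add: continuous_map_def Pi_iff)
  with e show False by simp
qed


lemma cm_coord: "continuous_map (Euclidean_space n) euclideanreal (\<lambda>y. y i)"
  unfolding Euclidean_space_def
  by (intro continuous_map_from_subtopology continuous_map_product_projection) simp

lemma E_box:
  assumes V: "openin (Euclidean_space n) V" and v: "v \<in> V"
  shows "\<exists>\<delta>>0. \<forall>y\<in>topspace (Euclidean_space n). (\<forall>i<n. \<bar>y i - v i\<bar> \<le> \<delta>) \<longrightarrow> y \<in> V"
proof -
  let ?T = "{x::nat\<Rightarrow>real. \<forall>i\<ge>n. x i = 0}"
  obtain W where W: "openin (powertop_real UNIV) W" "V = W \<inter> ?T"
    using V unfolding Euclidean_space_def openin_subtopology by blast
  have vW: "v \<in> W" using v W by blast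
  have vT: "\<forall>i\<ge>n. v i = 0" using v W by blast
  obtain U where U0: "\<forall>i. open (U i)" "v \<in> Pi\<^sub>E UNIV U" "Pi\<^sub>E UNIV U \<subseteq> W"
    using W(1) vW unfolding openin_product_topology_alt by auto
  have U: "\<forall>i. open (U i)" "\<forall>i. v i \<in> U i" "Pi\<^sub>E UNIV U \<subseteq> W"
    using U0 by (auto simp: PiE_iff)
  have "\<forall>i. \<exists>e>0. cball (v i) e \<subseteq> U i"
    using U open_contains_cball by blast
  then obtain ee where ee: "\<forall>i. ee i > 0 \<and> cball (v i) (ee i) \<subseteq> U i" by metis
  define \<delta> where "\<delta> = Min (insert 1 (ee ` {..<n}))"
  have dpos: "\<delta> > 0" unfolding \<delta>_def using ee by (subst Min_gr_iff) auto
  have dle: "i < n \<Longrightarrow> \<delta> \<le> ee i" for i unfolding \<delta>_def by (intro Min_le) auto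
  show ?thesis
  proof (intro exI[of _ \<delta>] conjI dpos ballI impI)
    fix y assume y: "y \<in> topspace (Euclidean_space n)" and yb: "\<forall>i<n. \<bar>y i - v i\<bar> \<le> \<delta>"
    have yT: "\<forall>i\<ge>n. y i = 0" using y by (simp add: topspace_Euclidean_space)
    have "y i \<in> U i" for i
    proof (cases "i < n")
      case True
      then have "y i \<in> cball (v i) (ee i)" using yb dle[OF True] by (auto simp: dist_real_def abs_minus_commute)
      then show ?thesis using ee[rule_format, of i] by (meson subsetD)
    next
      case False
      then have "y i = v i" using yT vT by simp
      then show ?thesis using U(2) by simp
    qed
    then have "y \<in> W" using U(3) by auto
    then show "y \<in> V" using W(2) yT by blast
  qed
qed

lemma E_compact:
  assumes "closedin (Euclidean_space n) S" and "\<forall>y\<in>S. \<forall>i<n. \<bar>y i - c i\<bar> \<le> R"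
  shows "compactin (Euclidean_space n) S"
proof -
  define B where "B = Pi\<^sub>E UNIV (\<lambda>i. if i < n then {c i - R .. c i + R} else {0::real})"
  have "compactin (powertop_real UNIV) B"
    unfolding B_def by (subst compactin_PiE) auto
  moreover have "B \<subseteq> {x. \<forall>i\<ge>n. x i = 0}"
  proof clarify
    fix x i assume "x \<in> B" "n \<le> i"
    then have "x i \<in> (if i < n then {c i - R .. c i + R} else {0})" unfolding B_def PiE_iff by blast
    then show "x i = 0" using \<open>n \<le> i\<close> by simp
  qed
  ultimately have cB: "compactin (Euclidean_space n) B"
    unfolding Euclidean_space_def by (simp add: compactin_subtopology)
  have "S \<subseteq> topspace (Euclidean_space n)" using assms(1) closedin_subset by blast
  then have "S \<subseteq> B"
  proof (intro subsetI)
    fix y assume yS: "y \<in> S"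
    then have yT: "\<forall>i\<ge>n. y i = 0"
      using \<open>S \<subseteq> topspace (Euclidean_space n)\<close> by (auto simp: topspace_Euclidean_space)
    have "y i \<in> (if i < n then {c i - R .. c i + R} else {0})" for i
    proof (cases "i < n")
      case True
      then have "\<bar>y i - c i\<bar> \<le> R" using assms(2) yS by blast
      then show ?thesis using True by (simp add: abs_le_iff)
    next
      case False then show ?thesis using yT by simp
    qed
    then show "y \<in> B" unfolding B_def by (simp add: PiE_iff)
  qed
  then show ?thesis using closed_compactin[OF cB _ assms(1)] by blast
qed


lemma chart_gh:
  assumes Hs: "Hausdorff_space X" and U: "openin X U"
    and V: "openin (Euclidean_space n) V" and v0: "v0 \<in> V" and n1: "n \<ge> 1"
    and hm: "homeomorphic_maps (subtopology X U) (subtopology (Euclidean_space n) V) k k'"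
  shows "\<exists>g h. continuous_map X euclideanreal g \<and> continuous_map (top_of_set {0..1::real}) X h
               \<and> (\<forall>s\<in>{0..1}. g (h s) = s)"
proof -
  let ?E = "Euclidean_space n"
  obtain \<delta>0 where d0: "\<delta>0 > 0" "\<forall>y\<in>topspace ?E. (\<forall>i<n. \<bar>y i - v0 i\<bar> \<le> \<delta>0) \<longrightarrow> y \<in> V"
    using E_box[OF V v0] by blast
  define \<delta> where "\<delta> = \<delta>0 / 2"
  have dpos: "\<delta> > 0" using d0 by (simp add: \<delta>_def)
  have box: "\<And>y. y \<in> topspace ?E \<Longrightarrow> (\<forall>i<n. \<bar>y i - v0 i\<bar> \<le> 2*\<delta>) \<Longrightarrow> y \<in> V"
    using d0 by (simp add: \<delta>_def)
  have VE: "V \<subseteq> topspace ?E" using V openin_subset by blast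
  have v0T: "\<forall>i\<ge>n. v0 i = 0" using v0 VE by (auto simp: topspace_Euclidean_space)
  define N where "N y = (\<Sum>i<n. \<bar>y i - v0 i\<bar>)" for y :: "nat \<Rightarrow> real"
  define G where "G y = max 0 (min ((y 0 - v0 0)/\<delta>) (2 - N y/\<delta>))" for y
  define C where "C = {y \<in> topspace ?E. N y \<le> 2*\<delta>}"
  have NE: "continuous_map ?E euclideanreal N"
    unfolding N_def by (intro continuous_intros cm_coord) auto
  have GE: "continuous_map ?E euclideanreal G"
    unfolding G_def using dpos by (intro continuous_intros cm_coord NE) auto
  have Ncomp: "\<bar>y i - v0 i\<bar> \<le> N y" if "i < n" for y i
    unfolding N_def using member_le_sum[of i "{..<n}" "\<lambda>i. \<bar>y i - v0 i\<bar>"] that by simp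
  have CV: "C \<subseteq> V"
  proof
    fix y assume "y \<in> C"
    then have y: "y \<in> topspace ?E" "N y \<le> 2*\<delta>" unfolding C_def by auto
    have "\<forall>i<n. \<bar>y i - v0 i\<bar> \<le> 2*\<delta>" using Ncomp y(2) order_trans by blast
    then show "y \<in> V" using box y(1) by blast
  qed
  have Ccl: "closedin ?E C"
  proof -
    have "closedin ?E {y \<in> topspace ?E. N y \<in> {..2*\<delta>}}"
      by (rule closedin_continuous_map_preimage[OF NE]) simp
    then show ?thesis by (simp add: C_def)
  qed
  have Ccpt: "compactin ?E C"
    by (rule E_compact[OF Ccl, of v0 "2*\<delta>"]) (use Ncomp in \<open>auto simp: C_def intro: order_trans\<close>)
  have k'c: "continuous_map (subtopology ?E V) (subtopology X U) k'"
   and kc: "continuous_map (subtopology X U) (subtopology ?E V) k"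
   and kk': "\<And>y. y \<in> topspace (subtopology ?E V) \<Longrightarrow> k (k' y) = y"
   and k'k: "\<And>x. x \<in> topspace (subtopology X U) \<Longrightarrow> k' (k x) = x"
    using hm unfolding homeomorphic_maps_def by auto
  define K where "K = k' ` C"
  have "compactin (subtopology ?E V) C" using Ccpt CV by (simp add: compactin_subtopology)
  then have "compactin (subtopology X U) K" unfolding K_def by (rule image_compactin[OF _ k'c])
  then have "compactin X K" by (simp add: compactin_subtopology)
  then have Kcl: "closedin X K" using compactin_imp_closedin Hs by blast
  have Gk: "continuous_map (subtopology X U) euclideanreal (\<lambda>x. G (k x))"
    using continuous_map_compose[OF continuous_map_into_fulltopology[OF kc] GE] by (simp add: o_def)
  define g where "g x = (if x \<in> U then G (k x) else 0)" for x
  have gc: "continuous_map X euclideanreal g"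
  proof (rule pasting_lemma[where I = "UNIV::bool set" and T = "\<lambda>b. if b then U else topspace X - K"
          and f = "\<lambda>b. if b then (\<lambda>x. G (k x)) else (\<lambda>x. 0)"])
    show "openin X (if b then U else topspace X - K)" for b
      using U Kcl by (auto simp: openin_diff)
    show "continuous_map (subtopology X (if b then U else topspace X - K)) euclideanreal
            (if b then (\<lambda>x. G (k x)) else (\<lambda>x. 0))" for b
      using Gk by auto
    have Z: "G (k x) = 0" if "x \<in> topspace X" "x \<in> U" "x \<notin> K" for x
    proof -
      have kx: "k x \<in> topspace (subtopology ?E V)" using kc that
        by (auto simp: continuous_map_def Pi_iff)
      have "\<not> N (k x) \<le> 2*\<delta>"
      proof
        assume "N (k x) \<le> 2*\<delta>"
        then have "k x \<in> C" using kx by (simp add: C_def)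
        then have "k' (k x) \<in> K" by (simp add: K_def)
        then show False using k'k that by simp
      qed
      then have "2 - N (k x)/\<delta> < 0" using dpos by (simp add: field_simps)
      then show ?thesis by (simp add: G_def)
    qed
    show "(if i then (\<lambda>x. G (k x)) else (\<lambda>x. 0)) x = (if j then (\<lambda>x. G (k x)) else (\<lambda>x. 0)) x"
      if "x \<in> topspace X \<inter> (if i then U else topspace X - K) \<inter> (if j then U else topspace X - K)" for i j x
      using that Z by (cases i; cases j) auto
    show "\<exists>j. j \<in> UNIV \<and> x \<in> (if j then U else topspace X - K) \<and>
            g x = (if j then (\<lambda>x. G (k x)) else (\<lambda>x. 0)) x" if "x \<in> topspace X" for x
    proof (cases "x \<in> U")
      case True then show ?thesis by (intro exI[of _ True]) (simp add: g_def)
    next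
      case False
      have "x \<notin> K" using False \<open>compactin (subtopology X U) K\<close> compactin_subset_topspace by fastforce
      then show ?thesis using False that by (intro exI[of _ False]) (simp add: g_def)
    qed
  qed
  define y where "y s = (\<lambda>i. if i = 0 then v0 0 + s*\<delta> else v0 i)" for s :: real
  have yT: "y s \<in> topspace ?E" for s
    using v0T n1 by (auto simp: y_def topspace_Euclidean_space)
  have yV: "y s \<in> V" if "s \<in> {0..1}" for s
    by (rule box[OF yT]) (use that dpos in \<open>auto simp: y_def abs_mult\<close>)
  have yc: "continuous_map (top_of_set {0..1::real}) ?E y"
    unfolding Euclidean_space_def continuous_map_in_subtopology
    apply (intro conjI)
    subgoal
      unfolding continuous_map_componentwise_UNIV y_def
      by (intro allI, case_tac "k = 0") (auto intro!: continuous_intros continuous_map_real_mult_right)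
    subgoal using yT by (auto simp: topspace_Euclidean_space)
    done
  have yc': "continuous_map (top_of_set {0..1::real}) (subtopology ?E V) y"
    using yc yV by (auto simp: continuous_map_in_subtopology)
  define h where "h s = k' (y s)" for s
  have hc: "continuous_map (top_of_set {0..1::real}) X h"
    using continuous_map_into_fulltopology[OF continuous_map_compose[OF yc' k'c]] unfolding h_def[abs_def] by (simp add: o_def)
  have "g (h s) = s" if s: "s \<in> {0..1}" for s
  proof -
    have yt: "y s \<in> topspace (subtopology ?E V)" using yT yV s by simp
    have "h s \<in> topspace (subtopology X U)"
      using k'c yt by (auto simp: h_def continuous_map_def Pi_iff)
    then have "h s \<in> U" by simp
    then have "g (h s) = G (y s)" using kk'[OF yt] by (simp add: g_def h_def)
    also have "N (y s) = s * \<delta>"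
    proof -
      have "N (y s) = (\<Sum>i<n. if i = 0 then \<bar>s*\<delta>\<bar> else 0)"
        unfolding N_def y_def by (intro sum.cong) auto
      also have "\<dots> = \<bar>s*\<delta>\<bar>" using n1 by (simp add: sum.delta)
      finally show ?thesis using s dpos by (simp add: abs_mult)
    qed
    then have "G (y s) = s" using s dpos by (simp add: G_def y_def)
    finally show ?thesis .
  qed
  then show ?thesis using gc hc by blast
qed


lemma finish:
  assumes HF: "homotopy_fixed_point_property X"
    and alt: "(\<forall>x\<in>topspace X. openin X {x}) \<or>
              (\<exists>g h. continuous_map X euclideanreal g \<and> continuous_map (top_of_set {0..1::real}) X h
               \<and> (\<forall>s\<in>{0..1}. g (h s) = s))"
  shows "\<exists>a. topspace X = {a}"
proof -
  have ne: "topspace X \<noteq> {}" using HFPP_nonempty[OF HF] .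
  from alt show ?thesis
  proof
    assume sing: "\<forall>x\<in>topspace X. openin X {x}"
    have op: "openin X S" if "S \<subseteq> topspace X" for S
      using that sing by (subst openin_subopen) blast
    show ?thesis
    proof (rule ccontr)
      assume "\<nexists>a. topspace X = {a}"
      then obtain a b where "a \<in> topspace X" "b \<in> topspace X" "a \<noteq> b" using ne by blast
      then show False using discrete_no_HFPP[of a X b] op HF by blast
    qed
  next
    assume "\<exists>g h. continuous_map X euclideanreal g \<and> continuous_map (top_of_set {0..1::real}) X h
               \<and> (\<forall>s\<in>{0..1}. g (h s) = s)"
    then show ?thesis using gh_no_HFPP HF by blast
  qed
qed

lemma cm_mem: "continuous_map X Y f \<Longrightarrow> x \<in> topspace X \<Longrightarrow> f x \<in> topspace Y"
  unfolding continuous_map_def by blast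

lemma manifold_alt:
  assumes M: "finite_dim_topological_manifold X" and ne: "topspace X \<noteq> {}"
  shows "(\<forall>x\<in>topspace X. openin X {x}) \<or>
              (\<exists>g h. continuous_map X euclideanreal g \<and> continuous_map (top_of_set {0..1::real}) X h
               \<and> (\<forall>s\<in>{0..1}. g (h s) = s))"
proof -
  have Hs: "Hausdorff_space X" using M unfolding finite_dim_topological_manifold_def by (elim conjE)
  obtain n where H: "\<forall>x\<in>topspace X. \<exists>U V. openin X U \<and> x \<in> U \<and>
          openin (Euclidean_space n) V \<and>
          subtopology X U homeomorphic_space subtopology (Euclidean_space n) V"
    using M unfolding finite_dim_topological_manifold_def by (elim conjE exE) (rule that)
  have ch: "\<exists>U V k k'. openin X U \<and> x \<in> U \<and> openin (Euclidean_space n) V \<and>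
       homeomorphic_maps (subtopology X U) (subtopology (Euclidean_space n) V) k k'"
    if x: "x \<in> topspace X" for x
  proof -
    obtain U V where "openin X U" "x \<in> U" "openin (Euclidean_space n) V"
        "subtopology X U homeomorphic_space subtopology (Euclidean_space n) V"
      using H x by (meson bspec)
    then show ?thesis unfolding homeomorphic_space_def by (elim exE) (intro exI conjI)
  qed
  show ?thesis
  proof (cases "n = 0")
    case True
    have "openin X {x}" if x: "x \<in> topspace X" for x
    proof -
      obtain U V k k' where U: "openin X U" "x \<in> U"
        and hm: "homeomorphic_maps (subtopology X U) (subtopology (Euclidean_space n) V) k k'"
        using ch[OF x] by (elim exE conjE)
      have UX: "U \<subseteq> topspace X" using U openin_subset by blast
      have kc: "continuous_map (subtopology X U) (subtopology (Euclidean_space n) V) k"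
        using hm unfolding homeomorphic_maps_def by (elim conjE)
      have k'k: "\<forall>x\<in>topspace (subtopology X U). k' (k x) = x"
        using hm unfolding homeomorphic_maps_def by (elim conjE)
      have kz: "k u = (\<lambda>i. 0)" if "u \<in> U" for u
      proof -
        have "u \<in> topspace (subtopology X U)" using that UX by auto
        then have "k u \<in> topspace (subtopology (Euclidean_space n) V)"
          using kc by (rule cm_mem[rotated])
        then have "k u \<in> topspace (Euclidean_space n)" by simp
        then show ?thesis using True by (simp add: topspace_Euclidean_space fun_eq_iff)
      qed
      have "U \<subseteq> {x}"
      proof
        fix u assume u: "u \<in> U"
        have "u \<in> topspace (subtopology X U)" using u UX by auto
        then have "u = k' (k u)" using k'k by simp
        also have "\<dots> = k' (k x)" using kz[OF u] kz[OF U(2)] by simp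
        also have "\<dots> = x" using k'k U(2) UX by auto
        finally show "u \<in> {x}" by simp
      qed
      then have "U = {x}" using U(2) by blast
      then show ?thesis using U by simp
    qed
    then have "\<forall>x\<in>topspace X. openin X {x}" by blast
    then show ?thesis by (rule disjI1)
  next
    case False
    obtain x0 where x0: "x0 \<in> topspace X" using ne by blast
    obtain U V k k' where U: "openin X U" "x0 \<in> U" and V: "openin (Euclidean_space n) V"
        and hm: "homeomorphic_maps (subtopology X U) (subtopology (Euclidean_space n) V) k k'"
      using ch[OF x0] by (elim exE conjE)
    have kc: "continuous_map (subtopology X U) (subtopology (Euclidean_space n) V) k"
      using hm unfolding homeomorphic_maps_def by (elim conjE)
    have "x0 \<in> topspace (subtopology X U)" using x0 U by simp
    then have "k x0 \<in> topspace (subtopology (Euclidean_space n) V)"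
      using kc by (rule cm_mem[rotated])
    then have "k x0 \<in> V" by simp
    moreover have "1 \<le> n" using False by simp
    ultimately have "\<exists>g h. continuous_map X euclideanreal g \<and> continuous_map (top_of_set {0..1::real}) X h
               \<and> (\<forall>s\<in>{0..1}. g (h s) = s)"
      by (rule chart_gh[OF Hs U(1) V _ _ hm])
    then show ?thesis by (rule disjI2)
  qed
qed

lemma cm_sumsq: "continuous_map (Euclidean_space m) euclideanreal (\<lambda>y. \<Sum>i<m. (y i)\<^sup>2)"
  by (intro continuous_intros cm_coord) auto

lemma disc_eq: "cw_disc m = {y \<in> topspace (Euclidean_space m). (\<Sum>i<m. (y i)\<^sup>2) \<in> {..1}}"
  by (auto simp: cw_disc_def topspace_Euclidean_space)
lemma odisc_eq: "cw_open_disc m = {y \<in> topspace (Euclidean_space m). (\<Sum>i<m. (y i)\<^sup>2) \<in> {..<1}}"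
  by (auto simp: cw_open_disc_def topspace_Euclidean_space)
lemma sphere_eq: "cw_sphere m = {y \<in> topspace (Euclidean_space m). (\<Sum>i<m. (y i)\<^sup>2) \<in> {1}}"
  by (auto simp: cw_sphere_def topspace_Euclidean_space)

lemma sq_le_sum: "(i::nat) < m \<Longrightarrow> (y i)\<^sup>2 \<le> (\<Sum>i<m. (y i::real)\<^sup>2)"
  using member_le_sum[of i "{..<m}" "\<lambda>i. (y i)\<^sup>2"] by auto

lemma disc_cpt: "compactin (Euclidean_space m) (cw_disc m)"
proof (rule E_compact[of _ _ "\<lambda>i. 0" 1])
  show "closedin (Euclidean_space m) (cw_disc m)"
    unfolding disc_eq by (rule closedin_continuous_map_preimage[OF cm_sumsq]) simp
  show "\<forall>y\<in>cw_disc m. \<forall>i<m. \<bar>y i - 0\<bar> \<le> 1"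
  proof (intro ballI allI impI)
    fix y i assume "y \<in> cw_disc m" "i < m"
    then have "(y i)\<^sup>2 \<le> 1" using sq_le_sum[of i m y] by (auto simp: cw_disc_def)
    then show "\<bar>y i - 0\<bar> \<le> 1" by (simp add: abs_square_le_1)
  qed
qed

lemma sphere_sub: "cw_sphere m \<subseteq> cw_disc m"
  by (auto simp: cw_sphere_def cw_disc_def)
lemma odisc_sub: "cw_open_disc m \<subseteq> cw_disc m"
  by (auto simp: cw_open_disc_def cw_disc_def)
lemma disc_split: "cw_disc m = cw_open_disc m \<union> cw_sphere m"
  by (auto simp: cw_sphere_def cw_disc_def cw_open_disc_def)

lemma sphere_cpt: "compactin (Euclidean_space m) (cw_sphere m)"
proof (rule closed_compactin[OF disc_cpt sphere_sub])
  show "closedin (Euclidean_space m) (cw_sphere m)"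
    unfolding sphere_eq by (rule closedin_continuous_map_preimage[OF cm_sumsq]) simp
qed

lemma odisc_open: "openin (Euclidean_space m) (cw_open_disc m)"
  unfolding odisc_eq by (rule openin_continuous_map_preimage[OF cm_sumsq]) simp

lemma disc_top: "cw_disc m \<subseteq> topspace (Euclidean_space m)"
  by (auto simp: cw_disc_def topspace_Euclidean_space)

lemma image_closed:
  assumes Hs: "Hausdorff_space X"
    and c: "continuous_map (subtopology (Euclidean_space m) (cw_disc m)) X f"
    and S: "S \<subseteq> cw_disc m" "compactin (Euclidean_space m) S"
  shows "closedin X (f ` S)"
proof -
  have "compactin (subtopology (Euclidean_space m) (cw_disc m)) S" using S by (simp add: compactin_subtopology)
  then have "compactin X (f ` S)" using image_compactin c by blast
  then show ?thesis using compactin_imp_closedin Hs by blast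
qed

lemma CW_alt:
  assumes CW: "finite_dim_CW_complex X" and ne: "topspace X \<noteq> {}"
  shows "(\<forall>x\<in>topspace X. openin X {x}) \<or>
              (\<exists>g h. continuous_map X euclideanreal g \<and> continuous_map (top_of_set {0..1::real}) X h
               \<and> (\<forall>s\<in>{0..1}. g (h s) = s))"
proof -
  obtain E d \<phi> N where Hs: "Hausdorff_space X" and
     pw: "pairwise disjnt E" and UE: "\<Union>E = topspace X" and nE: "{} \<notin> E" and
     cell: "\<forall>e\<in>E. d e \<le> N \<and>
           continuous_map (subtopology (Euclidean_space (d e)) (cw_disc (d e))) X (\<phi> e) \<and>
           \<phi> e ` cw_open_disc (d e) = e \<and>
           homeomorphic_map (subtopology (Euclidean_space (d e)) (cw_open_disc (d e)))
                            (subtopology X e) (\<phi> e) \<and>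
           \<phi> e ` cw_sphere (d e) \<subseteq> \<Union>{e'\<in>E. d e' < d e} \<and>
           finite {e'\<in>E. e' \<inter> \<phi> e ` cw_disc (d e) \<noteq> {}}" and
     weak: "\<forall>C. C \<subseteq> topspace X \<longrightarrow>
           (closedin X C \<longleftrightarrow> (\<forall>e\<in>E. closedin X (C \<inter> \<phi> e ` cw_disc (d e))))"
    using CW unfolding finite_dim_CW_complex_def by (elim conjE exE) (rule that; assumption)
  note cellD = cell[unfolded ball_conj_distrib]
  have dN: "\<forall>e\<in>E. d e \<le> N" using cellD by (rule conjunct1)
  have cont0: "\<forall>e\<in>E. continuous_map (subtopology (Euclidean_space (d e)) (cw_disc (d e))) X (\<phi> e)"
    using cellD[THEN conjunct2] by (rule conjunct1)
  have img0: "\<forall>e\<in>E. \<phi> e ` cw_open_disc (d e) = e"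
    using cellD[THEN conjunct2, THEN conjunct2] by (rule conjunct1)
  have hmap0: "\<forall>e\<in>E. homeomorphic_map (subtopology (Euclidean_space (d e)) (cw_open_disc (d e)))
                            (subtopology X e) (\<phi> e)"
    using cellD[THEN conjunct2, THEN conjunct2, THEN conjunct2] by (rule conjunct1)
  have sph0: "\<forall>e\<in>E. \<phi> e ` cw_sphere (d e) \<subseteq> \<Union>{e'\<in>E. d e' < d e}"
    using cellD[THEN conjunct2, THEN conjunct2, THEN conjunct2, THEN conjunct2] by (rule conjunct1)
  have Ene: "E \<noteq> {}"
  proof
    assume E0: "E = {}"
    have "topspace X = \<Union>E" using UE by (rule sym)
    also have "\<dots> = {}" using E0 by simp
    finally have "topspace X = {}" .
    with ne show False by contradiction
  qed
  have "d ` E \<subseteq> {..N}" using dN by auto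
  then have fin: "finite (d ` E)" by (rule finite_subset) simp
  define D where "D = Max (d ` E)"
  have dD: "e \<in> E \<Longrightarrow> d e \<le> D" for e unfolding D_def using fin by auto
  obtain e0 where e0: "e0 \<in> E" "d e0 = D" unfolding D_def using fin Ene
    by (metis (no_types, lifting) Max_in empty_is_image imageE)
  have cont: "\<And>e. e \<in> E \<Longrightarrow> continuous_map (subtopology (Euclidean_space (d e)) (cw_disc (d e))) X (\<phi> e)"
    using cont0 by blast
  have img: "\<And>e. e \<in> E \<Longrightarrow> \<phi> e ` cw_open_disc (d e) = e"
    using img0 by blast
  have sph: "\<And>e. e \<in> E \<Longrightarrow> \<phi> e ` cw_sphere (d e) \<subseteq> \<Union>{e'\<in>E. d e' < d e}"
    using sph0 by blast
  have imgtop: "\<phi> e ` cw_disc (d e) \<subseteq> topspace X" if "e \<in> E" for e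
    using cont[OF that] disc_top[of "d e"] by (auto simp: continuous_map_def Pi_iff)
  have disj: "x \<in> e \<Longrightarrow> x \<in> e' \<Longrightarrow> e \<in> E \<Longrightarrow> e' \<in> E \<Longrightarrow> e = e'" for x e e'
    using pw unfolding pairwise_def disjnt_def by blast
  show ?thesis
  proof (cases "D = 0")
    case True
    have d0: "e \<in> E \<Longrightarrow> d e = 0" for e using dD[of e] True by simp
    have disc0: "cw_disc 0 = {\<lambda>i. 0}" by (auto simp: cw_disc_def)
    have "openin X {x}" if x: "x \<in> topspace X" for x
    proof -
      have "closedin X (topspace X - {x})"
      proof (subst weak[rule_format])
        show "\<forall>e\<in>E. closedin X ((topspace X - {x}) \<inter> \<phi> e ` cw_disc (d e))"
        proof
          fix e assume e: "e \<in> E"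
          have pt: "\<phi> e (\<lambda>i. 0) \<in> topspace X" using imgtop[OF e] d0[OF e] disc0 by auto
          have "(topspace X - {x}) \<inter> \<phi> e ` cw_disc (d e) = (if \<phi> e (\<lambda>i. 0) = x then {} else {\<phi> e (\<lambda>i. 0)})"
            using d0[OF e] disc0 pt by auto
          then show "closedin X ((topspace X - {x}) \<inter> \<phi> e ` cw_disc (d e))"
            using pt Hs by (simp add: closedin_Hausdorff_singleton)
        qed
      qed auto
      then have "openin X (topspace X - (topspace X - {x}))"
        unfolding closedin_def by (rule conjunct2)
      moreover have "topspace X - (topspace X - {x}) = {x}" using x by blast
      ultimately show ?thesis by simp
    qed
    then have "\<forall>x\<in>topspace X. openin X {x}" by blast
    then show ?thesis by (rule disjI1)
  next
    case False
    have lower: "x \<notin> e0" if "e \<in> E" "y \<in> cw_sphere (d e)" "x = \<phi> e y" for e x y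
    proof
      assume "x \<in> e0"
      have "x \<in> \<Union>{e'\<in>E. d e' < d e}" using sph[OF that(1)] that(2,3) by blast
      then obtain e' where "e' \<in> E" "d e' < d e" "x \<in> e'" by blast
      then show False using disj[OF \<open>x \<in> e0\<close> \<open>x \<in> e'\<close> e0(1)] dD[OF that(1)] e0(2) by simp
    qed
    have clC: "closedin X (topspace X - e0)"
    proof (subst weak[rule_format])
      show "\<forall>e\<in>E. closedin X ((topspace X - e0) \<inter> \<phi> e ` cw_disc (d e))"
      proof
        fix e assume e: "e \<in> E"
        show "closedin X ((topspace X - e0) \<inter> \<phi> e ` cw_disc (d e))"
        proof (cases "e = e0")
          case True
          have "(topspace X - e0) \<inter> \<phi> e ` cw_disc (d e) = \<phi> e ` cw_sphere (d e)"
          proof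
            show "(topspace X - e0) \<inter> \<phi> e ` cw_disc (d e) \<subseteq> \<phi> e ` cw_sphere (d e)"
            proof
              fix x assume x: "x \<in> (topspace X - e0) \<inter> \<phi> e ` cw_disc (d e)"
              then obtain y where y: "y \<in> cw_disc (d e)" "x = \<phi> e y" by blast
              have "y \<notin> cw_open_disc (d e)"
              proof
                assume "y \<in> cw_open_disc (d e)"
                then have "x \<in> \<phi> e ` cw_open_disc (d e)" using y by blast
                then show False using img[OF e] True x by blast
              qed
              then have "y \<in> cw_sphere (d e)" using y disc_split by blast
              then show "x \<in> \<phi> e ` cw_sphere (d e)" using y by blast
            qed
            show "\<phi> e ` cw_sphere (d e) \<subseteq> (topspace X - e0) \<inter> \<phi> e ` cw_disc (d e)"
              using lower[OF e] imgtop[OF e] sphere_sub by blast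
          qed
          then show ?thesis
            using image_closed[OF Hs cont[OF e] sphere_sub sphere_cpt] by metis
        next
          case False
          have "(topspace X - e0) \<inter> \<phi> e ` cw_disc (d e) = \<phi> e ` cw_disc (d e)"
          proof -
            have "\<phi> e ` cw_open_disc (d e) \<inter> e0 = {}"
              using img[OF e] disj[OF _ _ e e0(1)] False by blast
            then have "\<phi> e ` cw_disc (d e) \<inter> e0 = {}"
              unfolding disc_split using lower[OF e] by blast
            then show ?thesis using imgtop[OF e] by blast
          qed
          then show ?thesis
            using image_closed[OF Hs cont[OF e] order_refl disc_cpt] by metis
        qed
      qed
    qed auto
    have e0X: "e0 \<subseteq> topspace X" using UE e0(1) by blast
    have "openin X (topspace X - (topspace X - e0))"
      using clC unfolding closedin_def by (rule conjunct2)
    moreover have "topspace X - (topspace X - e0) = e0" using e0X by blast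
    ultimately have opn: "openin X e0" by simp
    have hme: "homeomorphic_map (subtopology (Euclidean_space (d e0)) (cw_open_disc (d e0)))
                            (subtopology X e0) (\<phi> e0)"
      using hmap0 e0(1) by (rule bspec)
    then obtain k where hm: "homeomorphic_maps (subtopology (Euclidean_space (d e0)) (cw_open_disc (d e0)))
                            (subtopology X e0) (\<phi> e0) k"
      unfolding homeomorphic_map_maps by (elim exE)
    have v0: "(\<lambda>i. 0) \<in> cw_open_disc (d e0)" by (simp add: cw_open_disc_def)
    have D1: "1 \<le> d e0" using False e0(2) by simp
    show ?thesis
      using chart_gh[OF Hs opn odisc_open v0 D1 homeomorphic_maps_sym[THEN iffD1, OF hm]] by (rule disjI2)
  qed
qed

theorem corollary4p8:
  fixes X :: "'a topology"
  assumes "finite_dim_topological_manifold X \<or> finite_dim_CW_complex X"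
    and "homotopy_fixed_point_property X"
  shows "\<exists>a. topspace X = {a}"
proof (rule finish[OF assms(2)])
  have ne: "topspace X \<noteq> {}" using HFPP_nonempty[OF assms(2)] .
  show "(\<forall>x\<in>topspace X. openin X {x}) \<or>
              (\<exists>g h. continuous_map X euclideanreal g \<and> continuous_map (top_of_set {0..1::real}) X h
               \<and> (\<forall>s\<in>{0..1}. g (h s) = s))"
    using assms(1) manifold_alt[OF _ ne] CW_alt[OF _ ne] by blast
qed

end
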